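(* Let $\Phi(\omega)=\frac{\alpha\omega+\beta}{\gamma\omega+\delta}$ with $\alpha,\beta,\gamma,\delta\in\mathbb{R}$, $\alpha\delta-\beta\gamma=1$, and let $R$ be a real rational function such that $\Phi\circ R$ is a rational function (i.e. $R$ is not the constant $-\delta/\gamma$). Then $$\operatorname{Ind}_{\mathbb{P}\mathbb{R}}(\Phi\circ R)=\operatorname{Ind}_{\mathbb{P}\mathbb{R}}(R).$$
   Context: For a real rational function $R$ and a real pole $\omega_0$ of $R$ of odd order, $\operatorname{Ind}_{\omega_0}(R)=+1$ if $R(\omega_0-0)<0<R(\omega_0+0)$ and $-1$ if $R(\omega_0-0)>0>R(\omega_0+0)$; $\operatorname{Ind}_{-\infty}^{+\infty}(R)$ is the sum of these over all real poles of $R$ of odd order. Writing $R=f_1/f_0$, $R$ has a pole at $\infty$ of order $\deg f_1-\deg f_0$ when this is positive; if this order is odd, $\operatorname{Ind}_\infty(R)=+1$ if $R(+\infty)<0<R(-\infty)$ and $-1$ if $R(+\infty)>0>R(-\infty)$; otherwise $\operatorname{Ind}_\infty(R)=0$. Then $\operatorname{Ind}_{\mathbb{P}\mathbb{R}}(R)=\operatorname{Ind}_{-\infty}^{+\infty}(R)+\operatorname{Ind}_\infty(R)$ (constants have index $0$). *)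

theory Defs
  imports Complex_Main "HOL-Computational_Algebra.Polynomial"
begin

text \<open>A real rational function R is represented as a pair of real polynomials
  (f1, f0) with f0 \<noteq> 0, meaning R = f1/f0.  All notions below are independent
  of the chosen representation.\<close>

definition ratfun :: "real poly \<Rightarrow> real poly \<Rightarrow> real \<Rightarrow> real" where
  "ratfun f1 f0 = (\<lambda>t. poly f1 t / poly f0 t)"

definition odd_real_pole :: "real poly \<Rightarrow> real poly \<Rightarrow> real \<Rightarrow> bool" where
  "odd_real_pole f1 f0 x \<longleftrightarrow> f1 \<noteq> 0 \<and> order x f1 < order x f0 \<and> odd (order x f0 - order x f1)"

definition ind_at :: "real poly \<Rightarrow> real poly \<Rightarrow> real \<Rightarrow> int" where
  "ind_at f1 f0 x =
     (if odd_real_pole f1 f0 x then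
        (if filterlim (ratfun f1 f0) at_bot (at_left x) \<and> filterlim (ratfun f1 f0) at_top (at_right x) then 1
         else if filterlim (ratfun f1 f0) at_top (at_left x) \<and> filterlim (ratfun f1 f0) at_bot (at_right x) then -1
         else 0)
      else 0)"

definition ind_line :: "real poly \<Rightarrow> real poly \<Rightarrow> int" where
  "ind_line f1 f0 = (\<Sum>x\<in>{x. poly f0 x = 0}. ind_at f1 f0 x)"

text \<open>Index at infinity: pole of order deg f1 - deg f0 when positive.\<close>
definition ind_inf :: "real poly \<Rightarrow> real poly \<Rightarrow> int" where
  "ind_inf f1 f0 =
     (if degree f0 < degree f1 \<and> odd (degree f1 - degree f0) then
        (if filterlim (ratfun f1 f0) at_bot at_top \<and> filterlim (ratfun f1 f0) at_top at_bot then 1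
         else if filterlim (ratfun f1 f0) at_top at_top \<and> filterlim (ratfun f1 f0) at_bot at_bot then -1
         else 0)
      else 0)"

definition ind_PR :: "real poly \<Rightarrow> real poly \<Rightarrow> int" where
  "ind_PR f1 f0 = ind_line f1 f0 + ind_inf f1 f0"

end

theory Submission
  imports Defs
begin


definition sr :: "real poly \<Rightarrow> real \<Rightarrow> int" where
  "sr p x = (if poly (p div [:-x,1:]^order x p) x > 0 then 1 else -1)"

lemma decomp:
  fixes p :: "real poly"
  assumes "p \<noteq> 0"
  shows "\<exists>q. p = [:-x,1:]^order x p * q \<and> poly q x \<noteq> 0"
proof -
  define k where "k = order x p"
  define q where "q = p div [:-x,1:]^k"
  have p: "p = [:-x,1:]^k * q" unfolding q_def k_def using order_1[of x p]
    by simp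
  have "poly q x \<noteq> 0"
  proof
    assume "poly q x = 0"
    then have "[:-x,1:] dvd q" by (simp add: poly_eq_0_iff_dvd)
    then obtain r where "q = [:-x,1:] * r" by (rule dvdE)
    then have "p = [:-x,1:]^Suc k * r" using p by (simp only: power_Suc mult.assoc mult.commute[of "[:-x,1:]"])
    then have "[:-x,1:]^Suc (order x p) dvd p" unfolding k_def by (metis dvd_triv_left)
    with order_2[OF assms] show False by blast
  qed
  then have "p = [:-x,1:]^order x p * q \<and> poly q x \<noteq> 0" using p k_def by simp
  then show ?thesis by blast
qed

lemma decomp_unique:
  fixes p q :: "real poly"
  assumes "p = [:-x,1:]^k * q" "poly q x \<noteq> 0"
  shows "order x p = k" "p div [:-x,1:]^k = q"
proof -
  have q0: "q \<noteq> 0" using assms(2) by auto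
  have "p \<noteq> 0" using assms q0 by auto
  then have "order x p = order x ([:-x,1:]^k) + order x q" using assms(1) order_mult by blast
  then show "order x p = k" using order_power_n_n order_0I[OF assms(2)] by simp
  show "p div [:-x,1:]^k = q" using assms(1) by simp
qed

lemma sr_eq:
  assumes "p = [:-x,1:]^k * q" "poly q x \<noteq> 0"
  shows "sr p x = (if poly q x > 0 then 1 else -1)"
  using decomp_unique[OF assms] unfolding sr_def by simp

lemma LOC:
  fixes g1 g0 q1 q0 :: "real poly"
  assumes g1: "g1 = [:-x,1:]^a * q1" and g0: "g0 = [:-x,1:]^b * q0"
    and n1: "poly q1 x \<noteq> 0" and n0: "poly q0 x \<noteq> 0" and ab: "a < b" and od: "odd (b-a)"
  shows "poly q1 x * poly q0 x > 0 \<Longrightarrow> filterlim (ratfun g1 g0) at_top (at_right x) \<and> filterlim (ratfun g1 g0) at_bot (at_left x)"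
    and "poly q1 x * poly q0 x < 0 \<Longrightarrow> filterlim (ratfun g1 g0) at_bot (at_right x) \<and> filterlim (ratfun g1 g0) at_top (at_left x)"
proof -
  define m where "m = b - a"
  have bm: "b = a + m" using ab m_def by simp
  have eq: "ratfun g1 g0 t = (poly q1 t / poly q0 t) * inverse ((t-x)^m)" if "t \<noteq> x" for t
  proof -
    have tx: "t - x \<noteq> 0" using that by simp
    show ?thesis
      unfolding ratfun_def g1 g0 bm using tx
      by (cases "poly q0 t = 0") (simp_all add: power_add field_simps)
  qed
  have evr: "eventually (\<lambda>t. ratfun g1 g0 t = (poly q1 t / poly q0 t) * inverse ((t-x)^m)) (at_right x)"
    using eq by (auto simp: eventually_at_filter)
  have evl: "eventually (\<lambda>t. ratfun g1 g0 t = (poly q1 t / poly q0 t) * inverse ((t-x)^m)) (at_left x)"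
    using eq by (auto simp: eventually_at_filter)
  have tr: "((\<lambda>t. poly q1 t / poly q0 t) \<longlongrightarrow> poly q1 x / poly q0 x) (at_right x)"
    using n0 by (intro tendsto_intros) auto
  have tl: "((\<lambda>t. poly q1 t / poly q0 t) \<longlongrightarrow> poly q1 x / poly q0 x) (at_left x)"
    using n0 by (intro tendsto_intros) auto
  have m0: "m > 0" using ab m_def by simp
  have pr0: "((\<lambda>t. (t-x)^m) \<longlongrightarrow> 0) (at_right x)"
    using m0 by (auto intro!: tendsto_eq_intros)
  have pl0: "((\<lambda>t. (t-x)^m) \<longlongrightarrow> 0) (at_left x)"
    using m0 by (auto intro!: tendsto_eq_intros)
  have ir: "filterlim (\<lambda>t. inverse ((t-x)^m)) at_top (at_right x)"
    by (rule filterlim_inverse_at_top[OF pr0]) (auto simp: eventually_at_filter)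
  have il: "filterlim (\<lambda>t. inverse ((t-x)^m)) at_bot (at_left x)"
  proof (rule filterlim_inverse_at_bot[OF pl0])
    have "odd m" using od m_def by simp
    then show "eventually (\<lambda>t. (t-x)^m < 0) (at_left x)"
      by (auto simp: eventually_at_filter power_less_zero_eq)
  qed
  show "poly q1 x * poly q0 x > 0 \<Longrightarrow> filterlim (ratfun g1 g0) at_top (at_right x) \<and> filterlim (ratfun g1 g0) at_bot (at_left x)"
  proof -
    assume "poly q1 x * poly q0 x > 0"
    then have c: "poly q1 x / poly q0 x > 0" by (simp add: zero_less_mult_iff zero_less_divide_iff)
    show ?thesis
      using filterlim_tendsto_pos_mult_at_top[OF tr c ir] filterlim_tendsto_pos_mult_at_bot[OF tl c il]
        filterlim_cong[OF refl refl evr] filterlim_cong[OF refl refl evl] by simp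
  qed
  show "poly q1 x * poly q0 x < 0 \<Longrightarrow> filterlim (ratfun g1 g0) at_bot (at_right x) \<and> filterlim (ratfun g1 g0) at_top (at_left x)"
  proof -
    assume "poly q1 x * poly q0 x < 0"
    then have c: "poly q1 x / poly q0 x < 0" by (simp add: mult_less_0_iff divide_less_0_iff)
    show ?thesis
      using filterlim_tendsto_neg_mult_at_bot[OF tr c ir] 
        filterlim_tendsto_neg_mult_at_top_iff[OF tl c, of "\<lambda>t. inverse ((t-x)^m)"] il
        filterlim_cong[OF refl refl evr] filterlim_cong[OF refl refl evl] by simp
  qed
qed


lemma top_bot_False:
  fixes f :: "'a \<Rightarrow> real"
  assumes "filterlim f at_top F" "filterlim f at_bot F" "F \<noteq> bot"
  shows False
proof -
  have "eventually (\<lambda>x. 1 \<le> f x) F" using assms(1) by (simp add: filterlim_at_top)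
  moreover have "eventually (\<lambda>x. f x \<le> -1) F" using assms(2) by (simp add: filterlim_at_bot)
  ultimately have "eventually (\<lambda>x. False) F" by eventually_elim simp
  with assms(3) show False by (simp add: eventually_False)
qed

lemma ind_at_formula:
  assumes "g0 \<noteq> 0"
  shows "ind_at g1 g0 x = (if odd_real_pole g1 g0 x then sr (g1*g0) x else 0)"
proof (cases "odd_real_pole g1 g0 x")
  case False then show ?thesis by (simp add: ind_at_def)
next
  case True
  then have g1: "g1 \<noteq> 0" and ab: "order x g1 < order x g0" and od: "odd (order x g0 - order x g1)"
    by (auto simp: odd_real_pole_def)
  obtain q1 where q1: "g1 = [:-x,1:]^order x g1 * q1" "poly q1 x \<noteq> 0" using decomp[OF g1] by blast
  obtain q0 where q0: "g0 = [:-x,1:]^order x g0 * q0" "poly q0 x \<noteq> 0" using decomp[OF assms] by blast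
  have p: "g1 * g0 = [:-x,1:]^(order x g1 + order x g0) * (q1 * q0)"
    by (subst q1(1), subst q0(1)) (simp add: power_add mult_ac)
  have sr: "sr (g1*g0) x = (if poly q1 x * poly q0 x > 0 then 1 else -1)"
    using sr_eq[OF p] q1(2) q0(2) by simp
  note L = LOC[OF q1(1) q0(1) q1(2) q0(2) ab od]
  show ?thesis
  proof (cases "poly q1 x * poly q0 x > 0")
    case True
    then show ?thesis using L(1) sr \<open>odd_real_pole g1 g0 x\<close> by (simp add: ind_at_def)
  next
    case False
    then have neg: "poly q1 x * poly q0 x < 0" using q1(2) q0(2)
      by (simp add: not_less less_le)
    note L2 = L(2)[OF neg]
    have nf: "\<not> filterlim (ratfun g1 g0) at_top (at_right x)"
      using L2 top_bot_False[of "ratfun g1 g0" "at_right x"] by auto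
    show ?thesis using L2 nf sr False \<open>odd_real_pole g1 g0 x\<close> by (simp add: ind_at_def)
  qed
qed

lemma filterlim_at_bot_to_left:
  fixes f :: "real \<Rightarrow> 'b"
  shows "filterlim f F at_bot \<longleftrightarrow> filterlim (\<lambda>u. f (inverse u)) F (at_left 0)"
  unfolding filterlim_at_bot_mirror filterlim_at_top_to_right filterlim_at_left_to_right
  by simp

lemma ind_inf_formula:
  assumes g1: "g1 \<noteq> 0" and g0: "g0 \<noteq> 0"
  shows "ind_inf g1 g0 = (if degree g0 < degree g1 \<and> odd (degree g1 - degree g0)
      then (if lead_coeff g1 * lead_coeff g0 > 0 then -1 else 1) else 0)"
proof (cases "degree g0 < degree g1 \<and> odd (degree g1 - degree g0)")
  case False then show ?thesis by (simp add: ind_inf_def)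
next
  case True
  define m where "m = degree g1 - degree g0"
  define G1 where "G1 = [:-0,1:]^0 * reflect_poly g1"
  define G0 where "G0 = [:-0,1:]^m * reflect_poly g0"
  have n1: "poly (reflect_poly g1) 0 \<noteq> 0" using g1 by simp
  have n0: "poly (reflect_poly g0) 0 \<noteq> 0" using g0 by simp
  have m: "0 < m" "odd (m - 0)" using True m_def by auto
  note L = LOC[OF G1_def G0_def n1 n0 m]
  have eq: "ratfun g1 g0 (inverse u) = ratfun G1 G0 u" if "u \<noteq> 0" for u
  proof -
    have d: "degree g1 = m + degree g0" using True m_def by simp
    have "poly G1 u = u ^ degree g1 * poly g1 (inverse u)"
      unfolding G1_def using poly_reflect_poly_nz[OF that] by simp
    moreover have "poly G0 u = u^m * (u ^ degree g0 * poly g0 (inverse u))"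
      unfolding G0_def using poly_reflect_poly_nz[OF that] by simp
    ultimately show ?thesis unfolding ratfun_def d using that
      by (cases "poly g0 (inverse u) = 0") (simp_all add: power_add field_simps)
  qed
  have top: "filterlim (ratfun g1 g0) F at_top \<longleftrightarrow> filterlim (ratfun G1 G0) F (at_right 0)" for F
    unfolding filterlim_at_top_to_right
    by (rule filterlim_cong) (auto simp: eventually_at_filter eq)
  have bot: "filterlim (ratfun g1 g0) F at_bot \<longleftrightarrow> filterlim (ratfun G1 G0) F (at_left 0)" for F
    unfolding filterlim_at_bot_to_left
    by (rule filterlim_cong) (auto simp: eventually_at_filter eq)
  have c: "poly (reflect_poly g1) 0 * poly (reflect_poly g0) 0 = lead_coeff g1 * lead_coeff g0" by simp
  show ?thesis
  proof (cases "lead_coeff g1 * lead_coeff g0 > 0")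
    case True
    then have A: "filterlim (ratfun g1 g0) at_top at_top" "filterlim (ratfun g1 g0) at_bot at_bot"
      using L(1) c top bot by auto
    have nf: "\<not> filterlim (ratfun g1 g0) at_bot at_top"
      using A top_bot_False[of "ratfun g1 g0" at_top] by auto
    show ?thesis using A nf True \<open>degree g0 < degree g1 \<and> odd (degree g1 - degree g0)\<close>
      by (simp add: ind_inf_def)
  next
    case False
    then have neg: "lead_coeff g1 * lead_coeff g0 < 0" using g1 g0
      by (simp add: not_less less_le)
    then have A: "filterlim (ratfun g1 g0) at_bot at_top" "filterlim (ratfun g1 g0) at_top at_bot"
      using L(2) c top bot by auto
    show ?thesis using A False \<open>degree g0 < degree g1 \<and> odd (degree g1 - degree g0)\<close>
      by (simp add: ind_inf_def)
  qed
qed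

lemma sign_top_pos:
  fixes p :: "real poly"
  assumes "lead_coeff p > 0"
  shows "eventually (\<lambda>t. poly p t > 0) at_top"
proof -
  have "((\<lambda>u. poly (reflect_poly p) u) \<longlongrightarrow> poly (reflect_poly p) 0) (at_right 0)"
    by (intro tendsto_intros)
  then have "eventually (\<lambda>u. poly (reflect_poly p) u > 0) (at_right 0)"
    using assms by (intro order_tendstoD) auto
  moreover have "eventually (\<lambda>u::real. u > 0) (at_right 0)" by (simp add: eventually_at_filter)
  ultimately have "eventually (\<lambda>u. poly p (inverse u) > 0) (at_right 0)"
  proof eventually_elim
    case (elim u)
    then have "u ^ degree p * poly p (inverse u) > 0" using poly_reflect_poly_nz[of u p] by simp
    then show ?case using elim by (simp add: zero_less_mult_iff)
  qed
  then show ?thesis by (simp add: eventually_at_top_to_right)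
qed

lemma sign_top:
  fixes p :: "real poly"
  assumes "p \<noteq> 0"
  shows "eventually (\<lambda>t. sgn (poly p t) = sgn (lead_coeff p)) at_top"
proof (cases "lead_coeff p > 0")
  case True
  show ?thesis using sign_top_pos[OF True] by eventually_elim (use True in simp)
next
  case False
  then have "lead_coeff (-p) > 0" using assms by (simp add: lead_coeff_minus not_less less_le)
  have lc: "lead_coeff p < 0" using False assms by (simp add: not_less less_le)
  from sign_top_pos[OF \<open>lead_coeff (-p) > 0\<close>] show ?thesis
    by eventually_elim (use lc in \<open>auto simp: lead_coeff_minus\<close>)
qed

lemma sgn_m1_pow: "sgn ((-1::real)^n) = (-1)^n"
  by (cases "even n") auto

lemma sign_bot:
  fixes p :: "real poly"
  assumes "p \<noteq> 0"
  shows "eventually (\<lambda>t. sgn (poly p t) = (-1)^degree p * sgn (lead_coeff p)) at_bot"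
proof -
  define p' where "p' = pcompose p [:0,-1:]"
  have d: "degree p' = degree p" unfolding p'_def by (simp add: degree_pcompose)
  have l: "lead_coeff p' = lead_coeff p * (-1)^degree p" unfolding p'_def
    by (subst lead_coeff_comp) auto
  have "p' \<noteq> 0" using assms l by auto
  from sign_top[OF this] have "eventually (\<lambda>t. sgn (poly p (-t)) = (-1)^degree p * sgn (lead_coeff p)) at_top"
    by eventually_elim (simp add: p'_def[symmetric] poly_pcompose l sgn_mult sgn_m1_pow mult_ac, simp add: p'_def poly_pcompose)
  then show ?thesis by (simp add: at_bot_mirror eventually_filtermap)
qed


lemma no_root_sign:
  fixes q :: "real poly"
  assumes "q \<noteq> 0" "\<And>t. t \<ge> a \<Longrightarrow> poly q t \<noteq> 0"
  shows "sgn (poly q a) = sgn (lead_coeff q)"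
proof (rule ccontr)
  assume ne: "sgn (poly q a) \<noteq> sgn (lead_coeff q)"
  obtain N where N: "\<And>t. t \<ge> N \<Longrightarrow> sgn (poly q t) = sgn (lead_coeff q)"
    using sign_top[OF assms(1)] by (auto simp: eventually_at_top_linorder)
  define b where "b = max N (a+1)"
  have ab: "a < b" unfolding b_def by simp
  have sb: "sgn (poly q b) = sgn (lead_coeff q)" using N b_def by simp
  have qa: "poly q a \<noteq> 0" "poly q b \<noteq> 0" using assms(2) ab by auto
  have "poly q a * poly q b < 0" using ne sb qa
    by (auto simp: sgn_if mult_less_0_iff split: if_splits)
  from poly_IVT[OF ab this] obtain x where "x > a" "poly q x = 0" by auto
  with assms(2) show False by auto
qed

lemma odd_deg_root:
  fixes p :: "real poly"
  assumes "p \<noteq> 0" "odd (degree p)"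
  shows "\<exists>x. poly p x = 0"
proof -
  obtain N1 where N1: "\<And>t. t \<ge> N1 \<Longrightarrow> sgn (poly p t) = sgn (lead_coeff p)"
    using sign_top[OF assms(1)] by (auto simp: eventually_at_top_linorder)
  obtain N2 where N2: "\<And>t. t \<le> N2 \<Longrightarrow> sgn (poly p t) = (-1)^degree p * sgn (lead_coeff p)"
    using sign_bot[OF assms(1)] by (auto simp: eventually_at_bot_linorder)
  define a where "a = min N1 N2 - 1"
  define b where "b = max N1 N2 + 1"
  have ab: "a < b" unfolding a_def b_def by simp
  have sa: "sgn (poly p a) = - sgn (lead_coeff p)" using N2[of a] assms(2) a_def by simp
  have sb: "sgn (poly p b) = sgn (lead_coeff p)" using N1[of b] b_def by simp
  have l: "lead_coeff p \<noteq> 0" using assms by simp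
  have "poly p a * poly p b < 0" using sa sb l
    by (auto simp: sgn_if mult_less_0_iff split: if_splits)
  from poly_IVT[OF ab this] show ?thesis by auto
qed

lemma TEL:
  fixes p :: "real poly"
  assumes "p \<noteq> 0"
  shows "(\<Sum>x\<in>{x. poly p x = 0}. if odd (order x p) then sr p x else 0)
     = (if odd (degree p) then (if lead_coeff p > 0 then 1 else -1) else 0)"
proof -
  define n where "n = card {x. poly p x = 0}"
  have "\<And>p::real poly. p \<noteq> 0 \<Longrightarrow> card {x. poly p x = 0} = n \<Longrightarrow>
    (\<Sum>x\<in>{x. poly p x = 0}. if odd (order x p) then sr p x else 0)
     = (if odd (degree p) then (if lead_coeff p > 0 then 1 else -1) else 0)"
  proof (induction n)
    case 0
    then have e: "{x. poly p x = 0} = {}" using poly_roots_finite[OF 0(1)] by simp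
    then have "\<not> odd (degree p)" using odd_deg_root[OF 0(1)] by auto
    then show ?case using e by simp
  next
    case (Suc n p)
    define R where "R = {x. poly p x = 0}"
    have fR: "finite R" unfolding R_def using poly_roots_finite[OF Suc(2)] .
    have "R \<noteq> {}" using Suc(3) R_def by auto
    define a where "a = Max R"
    have aR: "a \<in> R" unfolding a_def using fR \<open>R \<noteq> {}\<close> by simp
    have amax: "\<And>x. x \<in> R \<Longrightarrow> x \<le> a" unfolding a_def using fR by simp
    define k where "k = order a p"
    have k1: "k \<ge> 1" using aR Suc(2) unfolding k_def R_def by (simp add: order_root)
    obtain q where pq: "p = [:-a,1:]^k * q" and qa: "poly q a \<noteq> 0"
      using decomp[OF Suc(2), of a] k_def by blast
    have q0: "q \<noteq> 0" using qa by auto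
    have pp: "poly p t = (t - a)^k * poly q t" for t by (subst pq) (simp add: poly_power)
    define Rq where "Rq = {x. poly q x = 0}"
    have RR: "R = insert a Rq" using k1 pp unfolding R_def Rq_def by auto
    have aRq: "a \<notin> Rq" using qa Rq_def by simp
    have fRq: "finite Rq" using fR RR by simp
    have cRq: "card Rq = n" using Suc(3) RR aRq fRq R_def by simp
    have IH: "(\<Sum>x\<in>Rq. if odd (order x q) then sr q x else 0)
       = (if odd (degree q) then (if lead_coeff q > 0 then 1 else -1) else 0)"
      using Suc.IH[OF q0] cRq Rq_def by simp
    have tmx: "(if odd (order x p) then sr p x else 0) = (-1)^k * (if odd (order x q) then sr q x else 0)"
      if "x \<in> Rq" for x
    proof -
      have xa: "x < a" using that RR amax aRq by (metis insertCI order_le_less)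
      obtain q' where qq: "q = [:-x,1:]^order x q * q'" and q'x: "poly q' x \<noteq> 0"
        using decomp[OF q0, of x] by blast
      have p2: "p = [:-x,1:]^order x q * ([:-a,1:]^k * q')"
        using pq qq by (metis mult.left_commute)
      have nz: "poly ([:-a,1:]^k * q') x \<noteq> 0" using xa q'x by (simp add: poly_power)
      have o: "order x p = order x q" using decomp_unique(1)[OF p2 nz] .
      have s1: "sr p x = (if (x - a)^k * poly q' x > 0 then 1 else -1)"
        using sr_eq[OF p2 nz] by (simp add: poly_power)
      have s2: "sr q x = (if poly q' x > 0 then 1 else -1)" using sr_eq[OF qq q'x] .
      have "sr p x = (-1)^k * sr q x"
      proof (cases "even k")
        case True
        then have "(x - a)^k > 0" using xa by (simp add: zero_less_power_eq)
        then show ?thesis using s1 s2 True by (simp add: zero_less_mult_iff)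
      next
        case False
        then have neg: "(x - a)^k < 0" using xa by (simp add: power_less_zero_eq)
        have "((x - a)^k * poly q' x > 0) = (\<not> poly q' x > 0)"
        proof (cases "poly q' x > 0")
          case True then show ?thesis using neg mult_neg_pos[of "(x-a)^k" "poly q' x"] by simp
        next
          case False then have "poly q' x < 0" using q'x by simp
          then show ?thesis using neg mult_neg_neg[of "(x-a)^k" "poly q' x"] by simp
        qed
        then show ?thesis using s1 s2 False by simp
      qed
      then show ?thesis using o by simp
    qed
    have sa: "sr p a = (if poly q a > 0 then 1 else -1)" using sr_eq[OF pq qa] .
    have oa: "order a p = k" using k_def by simp
    have sgq: "sgn (poly q a) = sgn (lead_coeff q)"
    proof (rule no_root_sign[OF q0])
      fix t assume "t \<ge> a"
      show "poly q t \<noteq> 0"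
      proof
        assume "poly q t = 0"
        then have "t \<in> Rq" by (simp add: Rq_def)
        then show False using \<open>t \<ge> a\<close> aRq RR amax by (metis insertCI order_antisym)
      qed
    qed
    have sq: "(if poly q a > 0 then 1 else -1) = (if lead_coeff q > 0 then 1 else (-1::int))"
      using sgq qa by (auto simp: sgn_if split: if_splits)
    have lp: "lead_coeff p = lead_coeff q" unfolding pq by (simp add: lead_coeff_mult lead_coeff_power)
    have dp: "degree p = k + degree q" unfolding pq by (simp add: degree_mult_eq q0 degree_linear_power)
    have "(\<Sum>x\<in>{x. poly p x = 0}. if odd (order x p) then sr p x else 0)
       = (if odd k then sr p a else 0) + (\<Sum>x\<in>Rq. if odd (order x p) then sr p x else 0)"
      using RR aRq fRq oa R_def by simp
    also have "(\<Sum>x\<in>Rq. if odd (order x p) then sr p x else 0) = (-1)^k * (\<Sum>x\<in>Rq. if odd (order x q) then sr q x else 0)"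
      using tmx by (simp add: sum_distrib_left)
    finally have S: "(\<Sum>x\<in>{x. poly p x = 0}. if odd (order x p) then sr p x else 0)
      = (if odd k then (if lead_coeff q > 0 then 1 else -1) else 0) + (-1)^k *
        (if odd (degree q) then (if lead_coeff q > 0 then 1 else -1) else 0)"
      unfolding IH sa sq by simp
    have lp2: "(lead_coeff p > 0) = (lead_coeff q > 0)" using lp by simp
    have dp2: "odd (degree p) = (odd k \<noteq> odd (degree q))" using dp by simp
    show ?case unfolding S by (simp only: lp2 dp2) (cases "even k"; cases "even (degree q)"; simp)
  qed
  then show ?thesis using assms n_def by blast
qed


lemma sr_uminus:
  fixes p :: "real poly"
  assumes "p \<noteq> 0"
  shows "sr (-p) x = - sr p x"
proof -
  obtain q where pq: "p = [:-x,1:]^order x p * q" and qx: "poly q x \<noteq> 0"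
    using decomp[OF assms] by blast
  have mq: "-p = [:-x,1:]^order x p * (-q)" using pq by (metis mult_minus_right)
  have "poly (-q) x \<noteq> 0" using qx by simp
  from sr_eq[OF mq this] sr_eq[OF pq qx] qx show ?thesis by auto
qed

lemma INV:
  fixes g1 g0 :: "real poly"
  assumes g1: "g1 \<noteq> 0" and g0: "g0 \<noteq> 0"
  shows "ind_PR (-g0) g1 = ind_PR g1 g0"
proof -
  define p where "p = g1 * g0"
  have p0: "p \<noteq> 0" using g1 g0 p_def by simp
  define Z where "Z = {x. poly p x = 0}"
  have fZ: "finite Z" unfolding Z_def using poly_roots_finite[OF p0] .
  have mg0: "-g0 \<noteq> 0" using g0 by simp
  have pt: "ind_at g1 g0 x - ind_at (-g0) g1 x = (if odd (order x p) then sr p x else 0)" for x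
  proof -
    have op: "order x p = order x g1 + order x g0" unfolding p_def using order_mult p0 p_def by blast
    have mp: "(-g0) * g1 = - p" unfolding p_def by simp
    have s: "sr ((-g0) * g1) x = - sr p x" unfolding mp using sr_uminus[OF p0] .
    have e1: "ind_at g1 g0 x = (if order x g1 < order x g0 \<and> odd (order x g0 - order x g1) then sr p x else 0)"
      using ind_at_formula[OF g0, of g1 x] g1 unfolding odd_real_pole_def p_def by simp
    have e2: "ind_at (-g0) g1 x = (if order x g0 < order x g1 \<and> odd (order x g1 - order x g0) then - sr p x else 0)"
      using ind_at_formula[OF g1, of "-g0" x] mg0 s unfolding odd_real_pole_def by simp
    show ?thesis unfolding e1 e2 op
      by (cases "order x g1 < order x g0"; cases "order x g0 < order x g1") auto
  qed
  have l1: "ind_line g1 g0 = (\<Sum>x\<in>Z. ind_at g1 g0 x)"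
    unfolding ind_line_def
  proof (rule sum.mono_neutral_left[OF fZ])
    show "{x. poly g0 x = 0} \<subseteq> Z" unfolding Z_def p_def by auto
    show "\<forall>x\<in>Z - {x. poly g0 x = 0}. ind_at g1 g0 x = 0"
      by (auto simp: ind_at_def odd_real_pole_def order_0I)
  qed
  have l2: "ind_line (-g0) g1 = (\<Sum>x\<in>Z. ind_at (-g0) g1 x)"
    unfolding ind_line_def
  proof (rule sum.mono_neutral_left[OF fZ])
    show "{x. poly g1 x = 0} \<subseteq> Z" unfolding Z_def p_def by auto
    show "\<forall>x\<in>Z - {x. poly g1 x = 0}. ind_at (-g0) g1 x = 0"
      by (auto simp: ind_at_def odd_real_pole_def order_0I)
  qed
  have "ind_line g1 g0 - ind_line (-g0) g1 = (\<Sum>x\<in>Z. if odd (order x p) then sr p x else 0)"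
    unfolding l1 l2 sum_subtractf[symmetric] pt ..
  also have "\<dots> = (if odd (degree p) then (if lead_coeff p > 0 then 1 else -1) else 0)"
    unfolding Z_def by (rule TEL[OF p0])
  finally have L: "ind_line g1 g0 - ind_line (-g0) g1 = (if odd (degree p) then (if lead_coeff p > 0 then 1 else -1) else 0)" .
  have i1: "ind_inf g1 g0 = (if degree g0 < degree g1 \<and> odd (degree g1 - degree g0)
      then (if lead_coeff g1 * lead_coeff g0 > 0 then -1 else 1) else 0)"
    using ind_inf_formula[OF g1 g0] .
  have i2: "ind_inf (-g0) g1 = (if degree g1 < degree g0 \<and> odd (degree g0 - degree g1)
      then (if lead_coeff g1 * lead_coeff g0 > 0 then 1 else -1) else 0)"
    using ind_inf_formula[OF mg0 g1] g1 g0 by (auto simp: lead_coeff_minus mult_ac)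
  have dp: "degree p = degree g1 + degree g0" unfolding p_def using degree_mult_eq g1 g0 by blast
  have lp: "lead_coeff p = lead_coeff g1 * lead_coeff g0" unfolding p_def by (simp add: lead_coeff_mult)
  have lp2: "(lead_coeff p > 0) = (lead_coeff g1 * lead_coeff g0 > 0)" using lp by simp
  have dp2: "odd (degree p) = odd (degree g1 + degree g0)" using dp by simp
  have L2: "ind_line g1 g0 - ind_line (-g0) g1 = (if odd (degree g1 + degree g0) then (if lead_coeff g1 * lead_coeff g0 > 0 then 1 else -1) else 0)"
    using L by (simp only: lp2 dp2)
  show ?thesis unfolding ind_PR_def using L2 i1 i2
    by (cases "degree g0 < degree g1"; cases "degree g1 < degree g0") auto
qed



lemma ORD:
  fixes g1 g0 :: "real poly"
  assumes g1: "g1 \<noteq> 0" and lt: "order x g1 < order x g0" and c: "c \<noteq> 0"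
  shows "smult c g1 + smult b g0 \<noteq> 0 \<and> order x (smult c g1 + smult b g0) = order x g1"
proof -
  define k where "k = order x g1"
  define d where "d = [:-x,1:]"
  define G where "G = smult c g1 + smult b g0"
  have d1: "d^k dvd g1" unfolding d_def k_def by (rule order_1)
  have d0: "d^Suc k dvd g0"
    using lt unfolding k_def d_def by (metis Suc_leI dvd_trans le_imp_power_dvd order_1)
  have d0': "d^k dvd g0" using dvd_trans[OF le_imp_power_dvd[of k "Suc k" d] d0] by simp
  have "d^k dvd G" unfolding G_def using d1 d0' by (simp add: dvd_smult)
  moreover have nd: "\<not> d^Suc k dvd G"
  proof
    assume "d^Suc k dvd G"
    moreover have "d^Suc k dvd smult b g0" using d0 by (simp add: dvd_smult)
    ultimately have "d^Suc k dvd G - smult b g0" by (rule dvd_diff)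
    then have "d^Suc k dvd smult c g1" unfolding G_def by simp
    then have "d^Suc k dvd g1" using c by (simp add: dvd_smult_iff)
    with order_2[OF g1] show False unfolding d_def k_def by blast
  qed
  ultimately have "order x G = k" unfolding d_def by (intro order_unique_lemma)
  moreover have "G \<noteq> 0" using nd by auto
  ultimately show ?thesis unfolding G_def k_def by simp
qed

lemma smult_back:
  fixes g1 g0 :: "real poly"
  assumes "c \<noteq> 0"
  shows "smult (1/c) (smult c g1 + smult b g0) + smult (-b/c) g0 = g1"
  using assms by (intro poly_eqI) (simp add: field_simps)

lemma pole_equiv:
  fixes g1 g0 :: "real poly"
  assumes c: "c \<noteq> 0"
  shows "odd_real_pole (smult c g1 + smult b g0) g0 x = odd_real_pole g1 g0 x"
proof
  assume "odd_real_pole g1 g0 x"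
  then show "odd_real_pole (smult c g1 + smult b g0) g0 x"
    using ORD[of g1 x g0 c b] c unfolding odd_real_pole_def by auto
next
  define G where "G = smult c g1 + smult b g0"
  assume "odd_real_pole (smult c g1 + smult b g0) g0 x"
  then have h: "G \<noteq> 0" "order x G < order x g0" "odd (order x g0 - order x G)"
    unfolding odd_real_pole_def G_def by auto
  have "1/c \<noteq> 0" using c by simp
  from ORD[OF h(1) h(2) this, of "-b/c"] smult_back[OF c, of g1 b]
  show "odd_real_pole g1 g0 x" using h unfolding odd_real_pole_def G_def by auto
qed

lemma deg_equiv:
  fixes g1 g0 :: "real poly"
  assumes c: "c \<noteq> 0" and lt: "degree g0 < degree g1"
  shows "degree (smult c g1 + smult b g0) = degree g1"
proof -
  have "degree (smult b g0) < degree (smult c g1)" using c lt by auto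
  then show ?thesis using c by (simp add: degree_add_eq_left)
qed

lemma deg_equiv2:
  fixes g1 g0 :: "real poly"
  assumes c: "c \<noteq> 0"
  shows "(degree g0 < degree (smult c g1 + smult b g0)) = (degree g0 < degree g1)"
    and "degree g0 < degree g1 \<Longrightarrow> degree (smult c g1 + smult b g0) = degree g1"
proof -
  show "degree g0 < degree g1 \<Longrightarrow> degree (smult c g1 + smult b g0) = degree g1"
    using deg_equiv[OF c] by blast
  have "1/c \<noteq> 0" using c by simp
  show "(degree g0 < degree (smult c g1 + smult b g0)) = (degree g0 < degree g1)"
  proof
    assume h: "degree g0 < degree (smult c g1 + smult b g0)"
    have "degree (smult (1/c) (smult c g1 + smult b g0) + smult (-b/c) g0) = degree (smult c g1 + smult b g0)"
      by (rule deg_equiv[OF \<open>1/c \<noteq> 0\<close> h])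
    then show "degree g0 < degree g1" using h unfolding smult_back[OF c] by simp
  next
    assume h: "degree g0 < degree g1"
    show "degree g0 < degree (smult c g1 + smult b g0)" unfolding deg_equiv[OF c h] by (rule h)
  qed
qed

lemma aff_filterlim:
  fixes f :: "'a \<Rightarrow> real"
  assumes c: "c > 0"
  shows "filterlim (\<lambda>t. b + c * f t) at_top F = filterlim f at_top F"
    and "filterlim (\<lambda>t. b + c * f t) at_bot F = filterlim f at_bot F"
proof -
  have tb: "((\<lambda>t. b) \<longlongrightarrow> b) F" and tc: "((\<lambda>t. c) \<longlongrightarrow> c) F" by auto
  show "filterlim (\<lambda>t. b + c * f t) at_top F = filterlim f at_top F"
    using filterlim_tendsto_add_at_top_iff[OF tb, of "\<lambda>t. c * f t"]
      filterlim_tendsto_pos_mult_at_top_iff[OF tc c, of f] by simp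
  show "filterlim (\<lambda>t. b + c * f t) at_bot F = filterlim f at_bot F"
    using filterlim_tendsto_add_at_bot_iff[OF tb, of "\<lambda>t. c * f t"]
      filterlim_tendsto_pos_mult_at_bot_iff[OF tc c, of f] by simp
qed

lemma ratfun_aff_filterlim:
  fixes g1 g0 :: "real poly"
  assumes c: "c > 0" and ev: "eventually (\<lambda>t. poly g0 t \<noteq> 0) F"
  shows "filterlim (ratfun (smult c g1 + smult b g0) g0) at_top F = filterlim (ratfun g1 g0) at_top F"
    and "filterlim (ratfun (smult c g1 + smult b g0) g0) at_bot F = filterlim (ratfun g1 g0) at_bot F"
proof -
  have e: "eventually (\<lambda>t. ratfun (smult c g1 + smult b g0) g0 t = b + c * ratfun g1 g0 t) F"
    using ev by eventually_elim (simp add: ratfun_def field_simps)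
  show "filterlim (ratfun (smult c g1 + smult b g0) g0) at_top F = filterlim (ratfun g1 g0) at_top F"
    using filterlim_cong[OF refl refl e] aff_filterlim(1)[OF c] by simp
  show "filterlim (ratfun (smult c g1 + smult b g0) g0) at_bot F = filterlim (ratfun g1 g0) at_bot F"
    using filterlim_cong[OF refl refl e] aff_filterlim(2)[OF c] by simp
qed

lemma ev_nz_right:
  fixes g0 :: "real poly"
  assumes "g0 \<noteq> 0"
  shows "eventually (\<lambda>t. poly g0 t \<noteq> 0) (at_right x)" "eventually (\<lambda>t. poly g0 t \<noteq> 0) (at_left x)"
proof -
  obtain q where gq: "g0 = [:-x,1:]^order x g0 * q" and qx: "poly q x \<noteq> 0"
    using decomp[OF assms] by blast
  have pp: "poly g0 t = (t - x)^order x g0 * poly q t" for t by (subst gq) (simp add: poly_power)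
  have "((\<lambda>t. poly q t) \<longlongrightarrow> poly q x) (at_right x)" by (intro tendsto_intros)
  from tendsto_imp_eventually_ne[OF this qx] have "eventually (\<lambda>t. poly q t \<noteq> 0) (at_right x)" .
  moreover have "eventually (\<lambda>t. t \<noteq> x) (at_right x)" by (simp add: eventually_at_filter)
  ultimately show "eventually (\<lambda>t. poly g0 t \<noteq> 0) (at_right x)"
    by eventually_elim (simp add: pp)
  have "((\<lambda>t. poly q t) \<longlongrightarrow> poly q x) (at_left x)" by (intro tendsto_intros)
  from tendsto_imp_eventually_ne[OF this qx] have "eventually (\<lambda>t. poly q t \<noteq> 0) (at_left x)" .
  moreover have "eventually (\<lambda>t. t \<noteq> x) (at_left x)" by (simp add: eventually_at_filter)
  ultimately show "eventually (\<lambda>t. poly g0 t \<noteq> 0) (at_left x)"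
    by eventually_elim (simp add: pp)
qed

lemma ev_nz_inf:
  fixes g0 :: "real poly"
  assumes "g0 \<noteq> 0"
  shows "eventually (\<lambda>t. poly g0 t \<noteq> 0) at_top" "eventually (\<lambda>t. poly g0 t \<noteq> 0) at_bot"
proof -
  have l: "lead_coeff g0 \<noteq> 0" using assms by simp
  have s: "sgn (lead_coeff g0) \<noteq> 0" using l by (simp only: sgn_0_0 not_False_eq_True)
  show "eventually (\<lambda>t. poly g0 t \<noteq> 0) at_top"
    using sign_top[OF assms]
  proof eventually_elim
    case (elim t)
    then show ?case using s by (metis sgn_zero)
  qed
  have s2: "(-1::real)^degree g0 * sgn (lead_coeff g0) \<noteq> 0" using s by simp
  show "eventually (\<lambda>t. poly g0 t \<noteq> 0) at_bot"
    using sign_bot[OF assms]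
  proof eventually_elim
    case (elim t)
    then show ?case using s2 by (metis sgn_zero)
  qed
qed

lemma AFF:
  fixes g1 g0 :: "real poly"
  assumes c: "c > 0" and g0: "g0 \<noteq> 0"
  shows "ind_PR (smult c g1 + smult b g0) g0 = ind_PR g1 g0"
proof -
  have c0: "c \<noteq> 0" using c by simp
  have "ind_at (smult c g1 + smult b g0) g0 x = ind_at g1 g0 x" for x
    unfolding ind_at_def pole_equiv[OF c0]
      ratfun_aff_filterlim[OF c ev_nz_right(1)[OF g0]] ratfun_aff_filterlim[OF c ev_nz_right(2)[OF g0]] ..
  then have l: "ind_line (smult c g1 + smult b g0) g0 = ind_line g1 g0"
    unfolding ind_line_def by simp
  have i: "ind_inf (smult c g1 + smult b g0) g0 = ind_inf g1 g0"
  proof (cases "degree g0 < degree g1")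
    case True
    show ?thesis unfolding ind_inf_def deg_equiv2(2)[OF c0 True] deg_equiv2(1)[OF c0]
      ratfun_aff_filterlim[OF c ev_nz_inf(1)[OF g0]] ratfun_aff_filterlim[OF c ev_nz_inf(2)[OF g0]] ..
  next
    case False
    then show ?thesis unfolding ind_inf_def deg_equiv2(1)[OF c0] by simp
  qed
  show ?thesis unfolding ind_PR_def l i ..
qed

lemma SCAL:
  fixes g1 g0 :: "real poly"
  assumes c: "c \<noteq> 0"
  shows "ind_PR (smult c g1) (smult c g0) = ind_PR g1 g0"
proof -
  have r: "ratfun (smult c g1) (smult c g0) = ratfun g1 g0"
    using c by (auto simp: ratfun_def fun_eq_iff)
  have o: "odd_real_pole (smult c g1) (smult c g0) x = odd_real_pole g1 g0 x" for x
    using c by (simp add: odd_real_pole_def order_smult)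
  have z: "{x. poly (smult c g0) x = 0} = {x. poly g0 x = 0}" using c by simp
  have a: "ind_at (smult c g1) (smult c g0) x = ind_at g1 g0 x" for x
    unfolding ind_at_def r o ..
  have l: "ind_line (smult c g1) (smult c g0) = ind_line g1 g0"
    unfolding ind_line_def z a ..
  have d1: "degree (smult c g1) = degree g1" and d0: "degree (smult c g0) = degree g0" using c by simp_all
  have i: "ind_inf (smult c g1) (smult c g0) = ind_inf g1 g0"
    unfolding ind_inf_def r d1 d0 ..
  show ?thesis unfolding ind_PR_def l i ..
qed


theorem theorem59:
  fixes \<alpha> \<beta> \<gamma> \<delta> :: real and f1 f0 :: "real poly"
  assumes "\<alpha> * \<delta> - \<beta> * \<gamma> = 1"
    and "f0 \<noteq> 0"
    and "smult \<gamma> f1 + smult \<delta> f0 \<noteq> 0"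
  shows "ind_PR (smult \<alpha> f1 + smult \<beta> f0) (smult \<gamma> f1 + smult \<delta> f0) = ind_PR f1 f0"
proof -
  define h where "h = smult \<gamma> f1 + smult \<delta> f0"
  define g1 where "g1 = smult \<alpha> f1 + smult \<beta> f0"
  have h0: "h \<noteq> 0" using assms(3) h_def by simp
  have f0: "f0 \<noteq> 0" by (rule assms(2))
  have det: "\<alpha> * \<delta> = 1 + \<beta> * \<gamma>" using assms(1) by simp
  have key: "\<alpha>*(\<delta>*c) = c + \<beta>*(\<gamma>*c)" for c
  proof -
    have "\<alpha>*(\<delta>*c) = (\<alpha>*\<delta>)*c" by simp
    also have "\<dots> = (1 + \<beta>*\<gamma>)*c" using det by simp
    also have "\<dots> = c + \<beta>*(\<gamma>*c)" by (simp add: algebra_simps)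
    finally show ?thesis .
  qed
  have "ind_PR g1 h = ind_PR f1 f0"
  proof (cases "\<gamma> = 0")
    case True
    then have a0: "\<alpha> \<noteq> 0" and ad: "\<alpha> * \<delta> = 1" using det by auto
    have e1: "smult \<alpha> h = f0" unfolding h_def using True ad
      by (intro poly_eqI) (simp add: algebra_simps)
    have e2: "smult \<alpha> g1 = smult (\<alpha>*\<alpha>) f1 + smult (\<alpha>*\<beta>) f0" unfolding g1_def
      by (intro poly_eqI) (simp add: algebra_simps)
    have aa: "\<alpha>*\<alpha> > 0" using a0 by (metis not_real_square_gt_zero)
    have "ind_PR g1 h = ind_PR (smult \<alpha> g1) (smult \<alpha> h)" using SCAL[OF a0] by simp
    also have "\<dots> = ind_PR (smult (\<alpha>*\<alpha>) f1 + smult (\<alpha>*\<beta>) f0) f0" unfolding e1 e2 ..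
    also have "\<dots> = ind_PR f1 f0" by (rule AFF[OF aa f0])
    finally show ?thesis .
  next
    case False
    have e1: "smult \<gamma> g1 = smult 1 (-f0) + smult (\<alpha>/\<gamma>) (smult \<gamma> h)" unfolding g1_def h_def
      using False by (intro poly_eqI) (simp add: field_simps key)
    have sh: "smult \<gamma> h \<noteq> 0" using False h0 by simp
    have "ind_PR g1 h = ind_PR (smult \<gamma> g1) (smult \<gamma> h)" using SCAL[OF False] by simp
    also have "\<dots> = ind_PR (-f0) (smult \<gamma> h)" unfolding e1 using AFF[of 1 "smult \<gamma> h" "-f0" "\<alpha>/\<gamma>"] sh by simp
    also have "\<dots> = ind_PR f1 f0"
    proof (cases "\<gamma> > 0")
      case True
      have e2: "-f0 = smult \<gamma> (smult (1/\<gamma>) (-f0) + smult 0 h)" using False by simp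
      have "ind_PR (-f0) (smult \<gamma> h) = ind_PR (smult (1/\<gamma>) (-f0) + smult 0 h) h"
        by (subst e2) (rule SCAL[OF False])
      also have "\<dots> = ind_PR (-f0) h" using AFF[of "1/\<gamma>" h "-f0" 0] True h0 by simp
      also have "\<dots> = ind_PR h f0" by (rule INV[OF h0 f0])
      also have "\<dots> = ind_PR f1 f0" unfolding h_def using AFF[of \<gamma> f0 f1 \<delta>] True f0 by simp
      finally show ?thesis .
    next
      case nt: False
      then have gn: "-\<gamma> > 0" using \<open>\<gamma> \<noteq> 0\<close> by simp
      have e2: "-f0 = smult (-1) (smult (-\<gamma>) (smult (-1/\<gamma>) f0 + smult 0 h))" using False by simp
      have e3: "smult \<gamma> h = smult (-1) (smult (-\<gamma>) h)" by simp
      have "ind_PR (-f0) (smult \<gamma> h) = ind_PR (smult (-\<gamma>) (smult (-1/\<gamma>) f0 + smult 0 h)) (smult (-\<gamma>) h)"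
        by (subst e2, subst e3) (rule SCAL, simp)
      also have "\<dots> = ind_PR (smult (-1/\<gamma>) f0 + smult 0 h) h" by (rule SCAL) (use False in simp)
      also have "\<dots> = ind_PR f0 h" using AFF[of "-1/\<gamma>" h f0 0] gn h0 by (simp add: divide_pos_neg)
      also have "\<dots> = ind_PR (-(-f0)) h" by simp
      also have "\<dots> = ind_PR h (-f0)" by (rule INV[OF h0]) (use f0 in simp)
      also have "\<dots> = ind_PR (smult (-1) h) (smult (-1) (-f0))" by (rule SCAL[symmetric]) simp
      also have "smult (-1) h = smult (-\<gamma>) f1 + smult (-\<delta>) f0" unfolding h_def
        by (intro poly_eqI) (simp add: algebra_simps)
      also have "smult (-1) (-f0) = f0" by simp
      also have "ind_PR (smult (-\<gamma>) f1 + smult (-\<delta>) f0) f0 = ind_PR f1 f0"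
        using AFF[of "-\<gamma>" f0 f1 "-\<delta>"] gn f0 by simp
      finally show ?thesis .
    qed
    finally show ?thesis .
  qed
  then show ?thesis unfolding g1_def h_def .
qed
end
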